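(* Let $G=(V,E)$ be a graph, let $c\ge1$ and $\epsilon\in[0,1/3)$, and let $\kappa(G)=(V,\kappa(E))$ be an $(\epsilon,c)$-kernel of $G$. If $M$ is a matching in $\kappa(G)$ such that every augmenting path in $\kappa(G)$ with respect to $M$ has length at least five, then the size of a maximum matching in $G$ is at most $(3+3\epsilon)|M|$.
   Context: Let $\mathcal N_v$ denote the set of neighbors of $v$ in $G$. A subgraph $\kappa(G)=(V,\kappa(E))$ with $\kappa(E)\subseteq E$ is given, together with a partition of $V$ into tight nodes $\kappa_T(V)$ and slack nodes $\kappa_S(V)$. For $v\in V$ let $\kappa(\mathcal N_v)=\{u\in\mathcal N_v:(u,v)\in\kappa(E)\}$ (the friends of $v$). For $c\ge1$ and $\epsilon\in[0,1/3)$, $\kappa(G)$ is an $(\epsilon,c)$-kernel of $G$ (w.r.t. this partition) iff: (i) $|\kappa(\mathcal N_v)|\le(1+\epsilon)c$ for all $v\in V$; (ii) $|\kappa(\mathcal N_v)|\ge(1-\epsilon)c$ for all $v\in\kappa_T(V)$; (iii) for all $u,v\in\kappa_S(V)$, if $(u,v)\in E$ then $(u,v)\in\kappa(E)$. Given a matching $M$ in a graph $H$, an augmenting path of length $2k+1$ ($k \ge 0$) is a simple path in $H$ with $2k+1$ edges whose two end nodes are unmatched in $M$ and whose edges alternate between non-$M$ and $M$ edges (first and last edges not in $M$). *)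

theory Defs
  imports Complex_Main
begin

definition graph :: "'a set \<Rightarrow> 'a set set \<Rightarrow> bool" where
  "graph V E \<longleftrightarrow> finite V \<and> (\<forall>e\<in>E. \<exists>u v. e = {u, v} \<and> u \<noteq> v \<and> u \<in> V \<and> v \<in> V)"

definition matching :: "'a set set \<Rightarrow> 'a set set \<Rightarrow> bool" where
  "matching E M \<longleftrightarrow> M \<subseteq> E \<and> (\<forall>e1\<in>M. \<forall>e2\<in>M. e1 \<noteq> e2 \<longrightarrow> e1 \<inter> e2 = {})"

definition max_matching_size :: "'a set set \<Rightarrow> nat" where
  "max_matching_size E = Max (card ` {M. matching E M})"

definition matched :: "'a set set \<Rightarrow> 'a \<Rightarrow> bool" where
  "matched M v \<longleftrightarrow> (\<exists>e\<in>M. v \<in> e)"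

text \<open>An augmenting path w.r.t. matching M in the graph with edge set H, given as the
  list of its vertices v_0, ..., v_{2k+1}; its length is the number of edges, length p - 1.\<close>
definition augmenting_path :: "'a set set \<Rightarrow> 'a set set \<Rightarrow> 'a list \<Rightarrow> bool" where
  "augmenting_path H M p \<longleftrightarrow>
     distinct p \<and> odd (length p - 1) \<and>
     (\<forall>i < length p - 1. {p ! i, p ! Suc i} \<in> H) \<and>
     \<not> matched M (hd p) \<and> \<not> matched M (last p) \<and>
     (\<forall>i < length p - 1. ({p ! i, p ! Suc i} \<in> M \<longleftrightarrow> odd i))"

definition friends :: "'a set set \<Rightarrow> 'a set \<Rightarrow> 'a \<Rightarrow> 'a set" where
  "friends KE V v = {u \<in> V. {u, v} \<in> KE}"

text \<open>(\<epsilon>,c)-kernel KE of the graph (V,E) w.r.t. the partition of V into tight nodes T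
  and slack nodes S.\<close>
definition kernel :: "real \<Rightarrow> real \<Rightarrow> 'a set \<Rightarrow> 'a set set \<Rightarrow> 'a set set \<Rightarrow> 'a set \<Rightarrow> 'a set \<Rightarrow> bool" where
  "kernel \<epsilon> c V E KE T S \<longleftrightarrow>
     KE \<subseteq> E \<and> T \<union> S = V \<and> T \<inter> S = {} \<and>
     (\<forall>v\<in>V. real (card (friends KE V v)) \<le> (1 + \<epsilon>) * c) \<and>
     (\<forall>v\<in>T. real (card (friends KE V v)) \<ge> (1 - \<epsilon>) * c) \<and>
     (\<forall>u\<in>S. \<forall>v\<in>S. {u, v} \<in> E \<longrightarrow> {u, v} \<in> KE)"

end

theory Submission
  imports Defs
begin

lemma edge_props:
  assumes "graph V E" "{u, v} \<in> E"
  shows "u \<noteq> v \<and> u \<in> V \<and> v \<in> V"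
proof -
  obtain a b where "{u,v} = {a,b}" "a \<noteq> b" "a \<in> V" "b \<in> V"
    using assms unfolding graph_def by blast
  then show ?thesis by (auto simp: doubleton_eq_iff)
qed

lemma edge_card2:
  assumes "graph V E" "e \<in> E"
  shows "card e = 2 \<and> finite e \<and> e \<subseteq> V"
  using assms unfolding graph_def by auto

lemma aug1:
  assumes "\<And>p. augmenting_path KE M p \<Longrightarrow> length p - 1 \<ge> 5"
    and "{u, v} \<in> KE" "u \<noteq> v" "\<not> matched M u" "\<not> matched M v"
  shows False
proof -
  have "{u,v} \<notin> M" using assms(4) unfolding matched_def by blast
  then have "augmenting_path KE M [u,v]"
    using assms unfolding augmenting_path_def by auto
  then show False using assms(1)[of "[u,v]"] by simp
qed

lemma aug3:
  assumes "\<And>p. augmenting_path KE M p \<Longrightarrow> length p - 1 \<ge> 5"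
    and "{u, a} \<in> KE" "{a, b} \<in> M" "{a,b} \<in> KE" "{b, w} \<in> KE"
    and "distinct [u,a,b,w]" "\<not> matched M u" "\<not> matched M w"
  shows False
proof -
  have "{u,a} \<notin> M" "{b,w} \<notin> M" using assms(7,8) unfolding matched_def by blast+
  then have "augmenting_path KE M [u,a,b,w]"
    using assms unfolding augmenting_path_def
    by (auto simp: less_Suc_eq nth_Cons split: nat.splits)
  then show False using assms(1)[of "[u,a,b,w]"] by simp
qed

theorem theorem3p10:
  fixes V :: "'a set" and E KE M :: "'a set set" and T S :: "'a set" and c \<epsilon> :: real
  assumes "graph V E"
    and "c \<ge> 1" and "0 \<le> \<epsilon>" and "\<epsilon> < 1/3"
    and "kernel \<epsilon> c V E KE T S"
    and "matching KE M"
    and "\<And>p. augmenting_path KE M p \<Longrightarrow> length p - 1 \<ge> 5"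
  shows "real (max_matching_size E) \<le> (3 + 3 * \<epsilon>) * real (card M)"
proof -
  note G = assms(1) and aug = assms(7)
  have KE: "KE \<subseteq> E" "T \<union> S = V" "T \<inter> S = {}"
    and up: "\<And>v. v \<in> V \<Longrightarrow> real (card (friends KE V v)) \<le> (1 + \<epsilon>) * c"
    and lo: "\<And>v. v \<in> T \<Longrightarrow> real (card (friends KE V v)) \<ge> (1 - \<epsilon>) * c"
    and sl: "\<And>u v. u \<in> S \<Longrightarrow> v \<in> S \<Longrightarrow> {u, v} \<in> E \<Longrightarrow> {u, v} \<in> KE"
    using assms(5) unfolding kernel_def by blast+
  have MK: "M \<subseteq> KE" and disj: "\<And>e1 e2. e1 \<in> M \<Longrightarrow> e2 \<in> M \<Longrightarrow> e1 \<noteq> e2 \<Longrightarrow> e1 \<inter> e2 = {}"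
    using assms(6) unfolding matching_def by auto
  have finV: "finite V" using G unfolding graph_def by auto
  have EV: "E \<subseteq> Pow V"
  proof
    fix e assume "e \<in> E"
    then obtain u v where "e = {u,v}" "u \<in> V" "v \<in> V" using G unfolding graph_def by blast
    then show "e \<in> Pow V" by auto
  qed
  have finE: "finite E" using finite_subset[OF EV] finV by simp
  have finM: "finite M" using MK KE(1) by (intro finite_subset[OF _ finE]) blast
  define W where "W = \<Union>M"
  have matchedW: "\<And>v. matched M v \<longleftrightarrow> v \<in> W" unfolding W_def matched_def by auto
  have WV: "W \<subseteq> V" using MK KE(1) EV unfolding W_def by blast
  have finW: "finite W" using finite_subset[OF WV finV] .
  have Me: "\<And>e. e \<in> M \<Longrightarrow> \<exists>a b. e = {a,b} \<and> a \<noteq> b \<and> a \<in> V \<and> b \<in> V"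
    using MK KE(1) G unfolding graph_def by blast
  have cardW: "card W \<le> 2 * card M"
  proof -
    have "card W \<le> sum card M" unfolding W_def by (rule card_Union_le_sum_card)
    also have "\<dots> = sum (\<lambda>_. 2) M"
      by (rule sum.cong) (auto dest!: Me)
    finally show ?thesis by simp
  qed
  define U where "U = {u \<in> T. u \<notin> W}"
  have UV: "U \<subseteq> V" using KE(2) unfolding U_def by auto
  have finU: "finite U" using finite_subset[OF UV finV] .
  have fV: "\<And>v. finite (friends KE V v)" using finV unfolding friends_def by auto
  have fUW: "\<And>u x. u \<in> U \<Longrightarrow> x \<in> friends KE V u \<Longrightarrow> x \<in> W"
  proof (rule ccontr)
    fix u x assume u: "u \<in> U" and x: "x \<in> friends KE V u" and nx: "x \<notin> W"
    have ux: "{x,u} \<in> KE" using x unfolding friends_def by auto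
    then have "x \<noteq> u" using edge_props[OF G] KE(1) by blast
    then show False using aug1[of KE M, OF aug ux] u nx matchedW unfolding U_def by auto
  qed
  define A where "A x = {u \<in> U. {u, x} \<in> KE}" for x
  define ind where "ind u x = (if {u, x} \<in> KE then 1 else (0::nat))" for u x
  have cnt_sum: "\<And>B P. finite B \<Longrightarrow> card {x \<in> B. P x} = (\<Sum>x\<in>B. if P x then 1 else (0::nat))"
    by (simp add: sum.If_cases) (metis Collect_conj_eq Collect_mem_eq)
  have s1: "(\<Sum>u\<in>U. card (friends KE V u)) = (\<Sum>u\<in>U. \<Sum>x\<in>W. ind u x)"
  proof (rule sum.cong[OF refl])
    fix u assume u: "u \<in> U"
    have "friends KE V u = {x \<in> W. {u, x} \<in> KE}"
      using fUW[OF u] WV unfolding friends_def by (auto simp: insert_commute)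
    then show "card (friends KE V u) = (\<Sum>x\<in>W. ind u x)"
      using cnt_sum[OF finW] unfolding ind_def by simp
  qed
  also have "\<dots> = (\<Sum>x\<in>W. \<Sum>u\<in>U. ind u x)" by (rule sum.swap)
  also have "\<dots> = (\<Sum>x\<in>W. card (A x))"
    unfolding A_def ind_def using cnt_sum[OF finU] by simp
  also have "\<dots> = (\<Sum>e\<in>M. \<Sum>x\<in>e. card (A x))"
    unfolding W_def
    by (subst sum.Union_disjoint) (use Me disj in auto)
  finally have s: "(\<Sum>u\<in>U. card (friends KE V u)) = (\<Sum>e\<in>M. \<Sum>x\<in>e. card (A x))" .
  have AU: "\<And>x. A x \<subseteq> U" unfolding A_def by auto
  have finA: "\<And>x. finite (A x)" using finite_subset[OF AU finU] .
  have Afr: "\<And>a b. {a,b} \<in> M \<Longrightarrow> a \<noteq> b \<Longrightarrow> b \<in> V \<Longrightarrow> real (card (A a)) + 1 \<le> (1 + \<epsilon>) * c"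
  proof -
    fix a b assume ab: "{a,b} \<in> M" "a \<noteq> b" "b \<in> V"
    have bW: "b \<in> W" using ab unfolding W_def by auto
    have aV: "a \<in> V" using ab WV unfolding W_def by auto
    have ba: "{b,a} \<in> KE" using ab MK by (metis insert_commute subsetD)
    have sub: "insert b (A a) \<subseteq> friends KE V a"
      using ba ab(3) UV unfolding A_def friends_def by auto
    have "b \<notin> A a" using bW AU unfolding U_def by auto
    then have "card (insert b (A a)) = card (A a) + 1" using finA[of a] by simp
    moreover have "card (insert b (A a)) \<le> card (friends KE V a)" by (rule card_mono[OF fV sub])
    ultimately have "card (A a) + 1 \<le> card (friends KE V a)" by simp
    then show "real (card (A a)) + 1 \<le> (1 + \<epsilon>) * c" using up[OF aV] by linarith
  qed
  have edge_bd: "\<And>e. e \<in> M \<Longrightarrow> real (\<Sum>x\<in>e. card (A x)) \<le> (1 + \<epsilon>) * c"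
  proof -
    fix e assume e: "e \<in> M"
    then obtain a b where ab: "e = {a,b}" "a \<noteq> b" "a \<in> V" "b \<in> V" using Me by blast
    have sum_ab: "(\<Sum>x\<in>e. card (A x)) = card (A a) + card (A b)" using ab by simp
    have ha: "real (card (A a)) + 1 \<le> (1 + \<epsilon>) * c" using Afr[of a b] ab e by simp
    have hb: "real (card (A b)) + 1 \<le> (1 + \<epsilon>) * c" using Afr[of b a] ab e by (simp add: insert_commute)
    show "real (\<Sum>x\<in>e. card (A x)) \<le> (1 + \<epsilon>) * c"
    proof (cases "A a = {} \<or> A b = {}")
      case True
      then show ?thesis using ha hb sum_ab by auto
    next
      case False
      then obtain u w where u: "u \<in> A a" and w: "w \<in> A b" by blast
      have aW: "a \<in> W" "b \<in> W" using e ab unfolding W_def by auto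
      have eq: "\<And>u w. u \<in> A a \<Longrightarrow> w \<in> A b \<Longrightarrow> u = w"
      proof (rule ccontr)
        fix u w assume u: "u \<in> A a" and w: "w \<in> A b" and ne: "u \<noteq> w"
        have uU: "u \<in> U" "w \<in> U" using u w AU by auto
        then have "u \<notin> W" "w \<notin> W" unfolding U_def by auto
        then have d: "distinct [u,a,b,w]" using aW ab ne by auto
        show False
          using aug3[of KE M, OF aug _ _ _ _ d] u w e ab MK uU matchedW \<open>u \<notin> W\<close> \<open>w \<notin> W\<close>
          unfolding A_def by (auto simp: insert_commute)
      qed
      have "A a = {u}" using eq u w by blast
      moreover have "A b = {u}" using eq u w by blast
      ultimately show ?thesis using sum_ab ha by simp
    qed
  qed
  have "real (card U) * ((1 - \<epsilon>) * c) = (\<Sum>u\<in>U. (1 - \<epsilon>) * c)" by simp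
  also have "\<dots> \<le> (\<Sum>u\<in>U. real (card (friends KE V u)))"
    by (rule sum_mono) (use lo U_def in auto)
  also have "\<dots> = real (\<Sum>e\<in>M. \<Sum>x\<in>e. card (A x))" using s by (metis of_nat_sum)
  also have "\<dots> = (\<Sum>e\<in>M. real (\<Sum>x\<in>e. card (A x)))" by simp
  also have "\<dots> \<le> (\<Sum>e\<in>M. (1 + \<epsilon>) * c)" by (rule sum_mono) (rule edge_bd)
  also have "\<dots> = real (card M) * ((1 + \<epsilon>) * c)" by simp
  finally have cU: "real (card U) * ((1 - \<epsilon>) * c) \<le> real (card M) * ((1 + \<epsilon>) * c)" .
  have cU2: "real (card U) * (1 - \<epsilon>) \<le> real (card M) * (1 + \<epsilon>)"
  proof -
    have "(real (card U) * (1 - \<epsilon>)) * c \<le> (real (card M) * (1 + \<epsilon>)) * c"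
      using cU by (simp add: algebra_simps)
    then show ?thesis using assms(2) by (simp add: mult_le_cancel_right)
  qed
  have cU3: "real (card U) \<le> (1 + 3 * \<epsilon>) * real (card M)"
  proof -
    have "real (card M) * (1 + \<epsilon>) \<le> ((1 + 3 * \<epsilon>) * real (card M)) * (1 - \<epsilon>)"
    proof -
      have "0 \<le> real (card M) * (\<epsilon> * (1 - 3 * \<epsilon>))" using assms(3,4) by simp
      then show ?thesis by (simp add: algebra_simps)
    qed
    then have "real (card U) * (1 - \<epsilon>) \<le> ((1 + 3 * \<epsilon>) * real (card M)) * (1 - \<epsilon>)"
      using cU2 by linarith
    then show ?thesis using assms(4) by (simp add: mult_le_cancel_right)
  qed
  have bound: "card N \<le> card W + card U" if N: "matching E N" for N
  proof -
    have NE: "N \<subseteq> E" and dN: "\<And>e1 e2. e1 \<in> N \<Longrightarrow> e2 \<in> N \<Longrightarrow> e1 \<noteq> e2 \<Longrightarrow> e1 \<inter> e2 = {}"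
      using N unfolding matching_def by auto
    have ex: "e \<inter> (W \<union> U) \<noteq> {}" if e: "e \<in> N" for e
    proof (rule ccontr)
      assume "\<not> e \<inter> (W \<union> U) \<noteq> {}"
      then have none: "e \<inter> (W \<union> U) = {}" by simp
      obtain u v where uv: "e = {u,v}" "u \<noteq> v" "u \<in> V" "v \<in> V"
        using G \<open>e \<in> N\<close> NE unfolding graph_def by (meson subsetD)
      have "u \<notin> T" "v \<notin> T" using none uv unfolding U_def by auto
      then have "u \<in> S" "v \<in> S" using uv KE(2) by auto
      then have "{u,v} \<in> KE" using sl e NE uv by auto
      then show False using aug1[of KE M, OF aug] uv none matchedW by auto
    qed
    define f where "f e = (SOME x. x \<in> e \<inter> (W \<union> U))" for e
    have fin: "\<And>e. e \<in> N \<Longrightarrow> f e \<in> e \<inter> (W \<union> U)"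
      unfolding f_def using ex by (metis ex_in_conv someI_ex)
    have "inj_on f N"
    proof (rule inj_onI)
      fix e1 e2 assume e12: "e1 \<in> N" "e2 \<in> N" "f e1 = f e2"
      have "f e1 \<in> e1 \<inter> e2" using fin[OF e12(1)] fin[OF e12(2)] e12(3) by auto
      then show "e1 = e2" using dN[OF e12(1,2)] by blast
    qed
    then have "card N \<le> card (W \<union> U)"
      using fin finW finU by (intro card_inj_on_le[of f N]) auto
    also have "\<dots> \<le> card W + card U" by (rule card_Un_le)
    finally show ?thesis .
  qed
  have finMs: "finite {N. matching E N}"
    using finE unfolding matching_def by (rule finite_subset[rotated, OF finite_Pow_iff[THEN iffD2]]) auto
  have "{} \<in> {N. matching E N}" unfolding matching_def by auto
  then have "max_matching_size E \<in> card ` {N. matching E N}"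
    unfolding max_matching_size_def using finMs by (intro Max_in) auto
  then obtain N where N: "matching E N" "max_matching_size E = card N" by auto
  have "real (card N) \<le> real (card W) + real (card U)" using bound[OF N(1)] by linarith
  also have "\<dots> \<le> 2 * real (card M) + (1 + 3 * \<epsilon>) * real (card M)"
    using cardW cU3 by linarith
  finally show ?thesis using N(2) by (simp add: algebra_simps)
qed

end
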